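(* Let $q\in\mathscr{P}_2(\mathbb{R}^d)$ not give mass to small sets, and let $\psi:\mathbb{R}^d\to(-\infty,+\infty]$ be a lower semicontinuous convex function. Let $\varphi^\psi(x)\coloneqq\inf_{p\in\mathscr{P}_2^x(\mathbb{R}^d)}\big(\int\psi\,dp-\mathrm{MCov}(p,q)\big)$. (i) If there are $x\in\mathbb{R}^d$ and $\hat y(x)\in\mathbb{R}^d$ such that the push-forward $\hat p_x\coloneqq\nabla\psi^\ast(\hat y(x)+\cdot\,)(q)$ of $q$ under $z\mapsto\nabla\psi^\ast(\hat y(x)+z)$ belongs to $\mathscr{P}_2^x(\mathbb{R}^d)$, then $\hat p_x$ is the unique optimizer of the infimum defining $\varphi^\psi(x)$. (ii) If additionally $\varphi^\psi(x)>-\infty$ and $x\in\operatorname{int}(\operatorname{dom}\psi)$, then $\hat y(x)$ is an optimizer of the supremum in \[ \sup_{y\in\mathbb{R}^d}\Big(\langle x,y\rangle-\int\psi^\ast(y+z)\,q(dz)\Big). \]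
   Context: $\mathscr{P}_2(\mathbb{R}^d)$: Borel probability measures with finite second moment; $\mathscr{P}_2^x(\mathbb{R}^d)$: those with barycenter $x$. $q$ does not give mass to small sets: $q(A)=0$ for measurable $A$ of Hausdorff dimension $\le d-1$. $\mathrm{MCov}(p,q)\coloneqq\sup_{\tilde\pi\in\mathsf{Cpl}(p,q)}\int\langle y,z\rangle\,d\tilde\pi$ over couplings. $\operatorname{dom}\psi=\{\psi<+\infty\}$. $\psi^\ast(z)\coloneqq\sup_y(\langle z,y\rangle-\psi(y))$, whose gradient is defined $q$-a.e. where relevant. *)

theory Defs
  imports "HOL-Probability.Probability"
begin

definition diam_pow :: "real \<Rightarrow> 'a::euclidean_space set \<Rightarrow> ennreal" where
  "diam_pow s C = (if C = {} then 0
     else if diameter C = 0 then (if s = 0 then 1 else 0)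
     else ennreal (diameter C powr s))"

definition hausdorff_pre :: "real \<Rightarrow> real \<Rightarrow> 'a::euclidean_space set \<Rightarrow> ennreal" where
  "hausdorff_pre s \<delta> A = Inf {(\<Sum>n. diam_pow s (C n)) | C.
      A \<subseteq> (\<Union>n. C n) \<and> (\<forall>n. bounded (C n) \<and> diameter (C n) \<le> \<delta>)}"

definition hausdorff_measure :: "real \<Rightarrow> 'a::euclidean_space set \<Rightarrow> ennreal" where
  "hausdorff_measure s A = (SUP \<delta>\<in>{0<..}. hausdorff_pre s \<delta> A)"

definition hausdorff_dim :: "'a::euclidean_space set \<Rightarrow> ereal" where
  "hausdorff_dim A = Inf (ereal ` {s. 0 \<le> s \<and> hausdorff_measure s A = 0})"

definition no_mass_small_sets :: "'a::euclidean_space measure \<Rightarrow> bool" where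
  "no_mass_small_sets q \<longleftrightarrow>
     (\<forall>A\<in>sets q. hausdorff_dim A \<le> ereal (real DIM('a) - 1) \<longrightarrow> emeasure q A = 0)"

definition P2 :: "'a::euclidean_space measure set" where
  "P2 = {p. prob_space p \<and> sets p = sets borel \<and> integrable p (\<lambda>y. (norm y)\<^sup>2)}"

definition P2x :: "'a::euclidean_space \<Rightarrow> 'a measure set" where
  "P2x x = {p\<in>P2. (\<integral>y. y \<partial>p) = x}"

definition couplings :: "'a::euclidean_space measure \<Rightarrow> 'a measure \<Rightarrow> ('a \<times> 'a) measure set" where
  "couplings p q = {\<pi>. prob_space \<pi> \<and> sets \<pi> = sets borel \<and>
      distr \<pi> borel fst = p \<and> distr \<pi> borel snd = q}"

definition MCov :: "'a::euclidean_space measure \<Rightarrow> 'a measure \<Rightarrow> ereal" where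
  "MCov p q = (SUP \<pi>\<in>couplings p q. ereal (\<integral>w. fst w \<bullet> snd w \<partial>\<pi>))"

definition eint :: "'a measure \<Rightarrow> ('a \<Rightarrow> ereal) \<Rightarrow> ereal" where
  "eint M f = enn2ereal (\<integral>\<^sup>+x. e2ennreal (f x) \<partial>M) - enn2ereal (\<integral>\<^sup>+x. e2ennreal (- f x) \<partial>M)"

definition econvex :: "('a::real_vector \<Rightarrow> ereal) \<Rightarrow> bool" where
  "econvex f \<longleftrightarrow> (\<forall>x y t. 0 < t \<and> t < 1 \<longrightarrow>
      f ((1 - t) *\<^sub>R x + t *\<^sub>R y) \<le> ereal (1 - t) * f x + ereal t * f y)"

definition elsc :: "('a::topological_space \<Rightarrow> ereal) \<Rightarrow> bool" where
  "elsc f \<longleftrightarrow> (\<forall>x. f x \<le> Liminf (at x) f)"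

definition edom :: "('a \<Rightarrow> ereal) \<Rightarrow> 'a set" where
  "edom f = {x. f x < \<infinity>}"

definition conj :: "('a::real_inner \<Rightarrow> ereal) \<Rightarrow> 'a \<Rightarrow> ereal" where
  "conj f z = (SUP y. ereal (z \<bullet> y) - f y)"

definition has_egradient :: "('a::euclidean_space \<Rightarrow> ereal) \<Rightarrow> 'a \<Rightarrow> 'a \<Rightarrow> bool" where
  "has_egradient f z g \<longleftrightarrow> (\<exists>e>0. \<forall>w\<in>ball z e. \<bar>f w\<bar> \<noteq> \<infinity>) \<and>
     ((\<lambda>w. real_of_ereal (f w)) has_derivative (\<lambda>h. g \<bullet> h)) (at z)"

definition phi :: "('a::euclidean_space \<Rightarrow> ereal) \<Rightarrow> 'a measure \<Rightarrow> 'a \<Rightarrow> ereal" where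
  "phi \<psi> q x = (INF p\<in>P2x x. eint p \<psi> - MCov p q)"

end

theory Submission
  imports Defs
begin


lemma FY: "ereal (v \<bullet> y) - f y \<le> conj f v"
  unfolding conj_def by (rule SUP_upper) auto

lemma elsc_open:
  assumes "elsc f" shows "open {y. c < f y}"
unfolding open_subopen[of "{y. c < f y}"]
proof (intro ballI)
  fix y0 assume "y0 \<in> {y. c < f y}"
  then have "c < f y0" by simp
  moreover have "f y0 \<le> Liminf (at y0) f" using assms by (simp add: elsc_def)
  ultimately have "eventually (\<lambda>y. c < f y) (at y0)"
    using le_Liminf_iff by blast
  then obtain S where S: "open S" "y0 \<in> S" "\<forall>y\<in>S. y \<noteq> y0 \<longrightarrow> c < f y"
    by (auto simp: eventually_at_topological)
  show "\<exists>T. open T \<and> y0 \<in> T \<and> T \<subseteq> {y. c < f y}"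
    using S \<open>c < f y0\<close> by (intro exI[of _ S]) auto
qed

lemma elsc_meas:
  assumes "elsc f" shows "f \<in> borel_measurable borel"
  by (rule borel_measurableI_greater) (use elsc_open[OF assms] in auto)

lemma conj_open: "open {v. c < conj f v}"
proof -
  have eq: "{v. c < conj f v} = (\<Union>y. {v. c < ereal (v \<bullet> y) - f y})"
    unfolding conj_def by (auto simp: less_SUP_iff)
  have "open {v. c < ereal (v \<bullet> y) - f y}" for y
  proof (cases "f y")
    case (real a)
    have "continuous_on UNIV (\<lambda>v. ereal (v \<bullet> y - a))"
      by (intro continuous_on_ereal continuous_intros)
    then have "open {v. c < ereal (v \<bullet> y - a)}"
      by (intro open_Collect_less continuous_intros)
    then show ?thesis using real by simp
  next
    case PInf
    then show ?thesis by simp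
  next
    case MInf
    then show ?thesis by simp
  qed
  then show ?thesis unfolding eq by auto
qed

lemma conj_meas: "conj f \<in> borel_measurable borel"
  by (rule borel_measurableI_greater) (simp add: borel_open[OF conj_open])

lemma DER:
  assumes "has_egradient f w g" "0 < \<epsilon>"
  shows "\<exists>r>0. \<forall>h. norm h < r \<longrightarrow> f (w + h) = ereal (real_of_ereal (f (w + h))) \<and>
     real_of_ereal (f (w + h)) \<le> real_of_ereal (f w) + g \<bullet> h + \<epsilon> * norm h"
proof -
  obtain e where e: "e > 0" "\<forall>u\<in>ball w e. \<bar>f u\<bar> \<noteq> \<infinity>"
    and D: "((\<lambda>u. real_of_ereal (f u)) has_derivative (\<lambda>h. g \<bullet> h)) (at w)"
    using assms(1) unfolding has_egradient_def by blast
  obtain d where d: "d > 0" "\<forall>y. norm (y - w) < d \<longrightarrow>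
      norm (real_of_ereal (f y) - real_of_ereal (f w) - g \<bullet> (y - w)) \<le> \<epsilon> * norm (y - w)"
    using D assms(2) unfolding has_derivative_at_alt by blast
  show ?thesis
  proof (intro exI[of _ "min e d"] conjI allI impI)
    show "0 < min e d" using e d by simp
  next
    fix h :: 'a assume h: "norm h < min e d"
    then have "w + h \<in> ball w e" by (simp add: dist_norm)
    then show "f (w + h) = ereal (real_of_ereal (f (w + h)))"
      using e by (simp add: ereal_real')
    have "norm (real_of_ereal (f (w+h)) - real_of_ereal (f w) - g \<bullet> h) \<le> \<epsilon> * norm h"
      using d(2)[rule_format, of "w+h"] h by simp
    then show "real_of_ereal (f (w + h)) \<le> real_of_ereal (f w) + g \<bullet> h + \<epsilon> * norm h"
      by simp
  qed
qed

lemma egrad_finite: "has_egradient f w g \<Longrightarrow> f w = ereal (real_of_ereal (f w))"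
  unfolding has_egradient_def by (auto simp: ereal_real')


lemma E_lemma:
  fixes \<psi> :: "'a::euclidean_space \<Rightarrow> ereal"
  assumes lsc: "elsc \<psi>" and ninf: "\<forall>y. \<psi> y \<noteq> -\<infinity>"
    and gr: "has_egradient (conj \<psi>) w g"
  shows "\<psi> g = ereal (w \<bullet> g - real_of_ereal (conj \<psi> w))"
proof -
  define s where "s = real_of_ereal (conj \<psi> w)"
  have cs: "conj \<psi> w = ereal s" unfolding s_def by (rule egrad_finite[OF gr])
  define L where "L = w \<bullet> g - s"
  have ge: "ereal L \<le> \<psi> g"
  proof (cases "\<psi> g")
    case (real a)
    have "ereal (w \<bullet> g) - \<psi> g \<le> conj \<psi> w" by (rule FY)
    then have "w \<bullet> g - a \<le> s" using real cs by simp
    then show ?thesis using real L_def by simp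
  qed (use ninf in auto)
  have le: "\<psi> g \<le> ereal L"
  proof (rule ccontr)
    assume "\<not> \<psi> g \<le> ereal L"
    then have "ereal L < \<psi> g" by simp
    then obtain c where c1: "ereal L < ereal c" and c2: "ereal c < \<psi> g"
      using ereal_dense2 by blast
    have Lc: "L < c" using c1 by simp
    have "open {y. ereal c < \<psi> y}" by (rule elsc_open[OF lsc])
    moreover have "g \<in> {y. ereal c < \<psi> y}" using c2 by simp
    ultimately obtain \<rho> where \<rho>: "\<rho> > 0" "ball g \<rho> \<subseteq> {y. ereal c < \<psi> y}"
      using open_contains_ball by blast
    define gap where "gap = c - L"
    have gap: "gap > 0" using Lc gap_def by simp
    define \<epsilon> where "\<epsilon> = min (\<rho>/4) (gap / (4 * (norm w + 1)))"
    have pos1: "norm w + 1 > 0" using norm_ge_zero[of w] by linarith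
    have pos4: "4 * (norm w + 1) > 0" using pos1 by (rule mult_pos_pos[rotated]) simp
    have \<epsilon>: "\<epsilon> > 0" using \<rho> gap pos4 unfolding \<epsilon>_def by (simp only: min_less_iff_conj) (auto intro: divide_pos_pos)
    have \<epsilon>1: "\<epsilon> \<le> \<rho>/4" unfolding \<epsilon>_def by (rule min.cobounded1)
    have \<epsilon>2: "\<epsilon> * (4 * (norm w + 1)) \<le> gap"
    proof -
      have "\<epsilon> \<le> gap / (4 * (norm w + 1))" unfolding \<epsilon>_def by (rule min.cobounded2)
      moreover have "4 * (norm w + 1) > 0" by (rule pos4)
      ultimately show ?thesis by (simp add: pos_le_divide_eq)
    qed
    obtain r where r: "r > 0" and rH: "\<forall>h. norm h < r \<longrightarrow> conj \<psi> (w + h) = ereal (real_of_ereal (conj \<psi> (w + h))) \<and>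
     real_of_ereal (conj \<psi> (w + h)) \<le> s + g \<bullet> h + \<epsilon> * norm h"
      using DER[OF gr \<epsilon>] unfolding s_def by blast
    define t where "t = min (r/2) 1"
    have t: "t > 0" "t < r" "t \<le> 1" using r by (auto simp: t_def)
    have "ereal (s - \<epsilon> * t) < conj \<psi> w" using cs \<epsilon> t by simp
    then obtain y where y: "ereal (s - \<epsilon> * t) < ereal (w \<bullet> y) - \<psi> y"
      unfolding conj_def by (auto simp: less_SUP_iff)
    obtain a where a: "\<psi> y = ereal a"
      using y ninf by (cases "\<psi> y") auto
    have ya: "s - \<epsilon> * t < w \<bullet> y - a" using y a by simp
    have dist: "norm (y - g) < 2 * \<epsilon>"
    proof (cases "y = g")
      case True then show ?thesis using \<epsilon> by simp
    next
      case False
      define n where "n = norm (y - g)"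
      have n: "n > 0" using False by (simp add: n_def)
      define h where "h = (t / n) *\<^sub>R (y - g)"
      have nh: "norm h = t" using n t by (simp add: h_def n_def)
      have hy: "h \<bullet> (y - g) = t * n"
        using n by (simp add: h_def n_def power2_norm_eq_inner[symmetric] power2_eq_square)
      obtain F where F: "conj \<psi> (w + h) = ereal F" "F \<le> s + g \<bullet> h + \<epsilon> * t"
        using rH nh t by force
      have "ereal ((w + h) \<bullet> y) - \<psi> y \<le> conj \<psi> (w + h)" by (rule FY)
      then have "(w + h) \<bullet> y - a \<le> F" using F a by simp
      then have "w \<bullet> y + h \<bullet> y - a \<le> s + g \<bullet> h + \<epsilon> * t" using F by (simp add: inner_add_left)
      with ya have "h \<bullet> y - g \<bullet> h < 2 * \<epsilon> * t" by simp
      then have "t * n < 2 * \<epsilon> * t" using hy by (simp add: inner_diff_right inner_commute)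
      then show ?thesis using t by (simp add: n_def)
    qed
    then have "y \<in> ball g \<rho>" using \<epsilon>1 \<rho> by (simp add: dist_norm norm_minus_commute)
    then have "ereal c < \<psi> y" using \<rho> by auto
    then have ca: "c < a" using a by simp
    have "w \<bullet> y = w \<bullet> g + w \<bullet> (y - g)" by (simp add: inner_diff_right)
    also have "\<dots> \<le> w \<bullet> g + norm w * norm (y - g)"
      using Cauchy_Schwarz_ineq2[of w "y - g"] by simp
    also have "\<dots> \<le> w \<bullet> g + norm w * (2 * \<epsilon>)"
      using dist by (intro add_left_mono mult_left_mono) auto
    finally have wy: "w \<bullet> y \<le> w \<bullet> g + norm w * (2 * \<epsilon>)" .
    have "\<epsilon> * t \<le> \<epsilon>" using t \<epsilon> by (simp add: mult_left_le)
    then have A: "c < L + (norm w * (2 * \<epsilon>) + \<epsilon>)"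
      using ca ya wy L_def by linarith
    have B: "norm w * (2 * \<epsilon>) + \<epsilon> \<le> gap / 2 + gap/4"
      proof -
      have "0 \<le> \<epsilon> * norm w" using \<epsilon> by simp
      then show ?thesis using \<epsilon>2 \<epsilon> gap by (simp add: algebra_simps)
    qed
    show False using A B gap gap_def by linarith
  qed
  show ?thesis using ge le L_def antisym by (simp add: s_def)
qed


lemma enn2ereal_fin: "X < top \<Longrightarrow> enn2ereal X = ereal (enn2real X)"
  by (metis enn2ereal_eq_top_iff enn2ereal_nonneg ereal_real' ereal_infty_less_eq(2)
      real_of_ereal_enn2ereal less_irrefl abs_ereal_ge0 order_le_less_trans abs_ereal_pos)

lemma eint_real:
  assumes ae: "AE x in M. f x = ereal (h x)" and h: "integrable M h"
  shows "eint M f = ereal (integral\<^sup>L M h)"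
proof -
  have 1: "(\<integral>\<^sup>+x. e2ennreal (f x) \<partial>M) = (\<integral>\<^sup>+x. ennreal (h x) \<partial>M)"
    by (rule nn_integral_cong_AE) (use ae in auto)
  have 2: "(\<integral>\<^sup>+x. e2ennreal (- f x) \<partial>M) = (\<integral>\<^sup>+x. ennreal (- h x) \<partial>M)"
    by (rule nn_integral_cong_AE) (use ae in auto)
  have f1: "(\<integral>\<^sup>+x. ennreal (h x) \<partial>M) < top"
    using integrableD(2)[OF h] by (simp add: top.not_eq_extremum)
  have f2: "(\<integral>\<^sup>+x. ennreal (- h x) \<partial>M) < top"
    using integrableD(3)[OF h] by (simp add: top.not_eq_extremum)
  show ?thesis
    unfolding eint_def 1 2 enn2ereal_fin[OF f1] enn2ereal_fin[OF f2]
    using real_lebesgue_integral_def[OF h] by simp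
qed

lemma eint_lower:
  fixes f :: "'b \<Rightarrow> ereal"
  assumes f: "f \<in> borel_measurable M" and lb: "\<And>x. x \<in> space M \<Longrightarrow> ereal (a x) \<le> f x"
    and a: "integrable M a" and ne: "eint M f \<noteq> \<infinity>"
  shows "integrable M (\<lambda>x. real_of_ereal (f x))" "AE x in M. f x = ereal (real_of_ereal (f x))"
    "eint M f = ereal (\<integral>x. real_of_ereal (f x) \<partial>M)"
proof -
  have am: "a \<in> borel_measurable M" using a by auto
  have Bb: "(\<integral>\<^sup>+x. ennreal (- a x) \<partial>M) < top"
    using integrableD(3)[OF a] by (simp add: top.not_eq_extremum)
  have B: "(\<integral>\<^sup>+x. e2ennreal (- f x) \<partial>M) < top"
  proof (rule le_less_trans[OF _ Bb], rule nn_integral_mono)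
    fix x assume "x \<in> space M"
    then have "ereal (a x) \<le> f x" using lb by blast
    then have "- f x \<le> ereal (- a x)" by (metis ereal_minus_le_minus uminus_ereal.simps(1))
    then show "e2ennreal (- f x) \<le> ennreal (- a x)"
      using e2ennreal_mono by fastforce
  qed
  have A: "(\<integral>\<^sup>+x. e2ennreal (f x) \<partial>M) < top"
  proof (rule ccontr)
    assume "\<not> ?thesis"
    then have "(\<integral>\<^sup>+x. e2ennreal (f x) \<partial>M) = top" using top.not_eq_extremum by blast
    then have "eint M f = \<infinity>"
      unfolding eint_def using enn2ereal_fin[OF B] by simp
    then show False using ne by simp
  qed
  have fm: "(\<lambda>x. e2ennreal (f x)) \<in> borel_measurable M"
    using f by measurable
  have "AE x in M. e2ennreal (f x) \<noteq> \<infinity>"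
    by (rule nn_integral_PInf_AE[OF fm]) (use A in auto)
  then show ae: "AE x in M. f x = ereal (real_of_ereal (f x))"
  proof (rule AE_mp, intro AE_I2 impI)
    fix x assume x: "x \<in> space M" "e2ennreal (f x) \<noteq> \<infinity>"
    have "f x \<noteq> -\<infinity>" using lb[OF x(1)] by auto
    moreover have "f x \<noteq> \<infinity>" using x(2) by auto
    ultimately show "f x = ereal (real_of_ereal (f x))" by (cases "f x") auto
  qed
  have pw: "ennreal (norm (real_of_ereal (f x))) \<le> e2ennreal (f x) + ennreal (- a x)"
    if x: "x \<in> space M" for x
  proof (cases "f x")
    case (real r)
    have ra: "- r \<le> - a x" using lb[OF x] real by simp
    show ?thesis
    proof (cases "0 \<le> r")
      case True then show ?thesis using real by (simp add: add_increasing2)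
    next
      case False
      then have "ennreal (norm r) = ennreal (- r)" by simp
      also have "\<dots> \<le> ennreal (- a x)" using ra by (rule ennreal_leI)
      also have "\<dots> \<le> e2ennreal (f x) + ennreal (- a x)" by (simp add: add_increasing)
      finally show ?thesis using real by simp
    qed
  next
    case PInf then show ?thesis by simp
  next
    case MInf then show ?thesis using lb[OF x] by simp
  qed
  have rm: "(\<lambda>x. real_of_ereal (f x)) \<in> borel_measurable M" using f by measurable
  show int: "integrable M (\<lambda>x. real_of_ereal (f x))"
  proof (rule integrableI_bounded[OF rm])
    have "(\<integral>\<^sup>+x. ennreal (norm (real_of_ereal (f x))) \<partial>M) \<le>
        (\<integral>\<^sup>+x. e2ennreal (f x) + ennreal (- a x) \<partial>M)"
      by (rule nn_integral_mono) (rule pw)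
    also have "\<dots> = (\<integral>\<^sup>+x. e2ennreal (f x) \<partial>M) + (\<integral>\<^sup>+x. ennreal (- a x) \<partial>M)"
      by (rule nn_integral_add) (use fm am in auto)
    also have "\<dots> < top" using A Bb by (simp add: ennreal_add_less_top)
    finally show "(\<integral>\<^sup>+x. ennreal (norm (real_of_ereal (f x))) \<partial>M) < \<infinity>" by simp
  qed
  show "eint M f = ereal (\<integral>x. real_of_ereal (f x) \<partial>M)"
    by (rule eint_real[OF ae int])
qed




lemma sq_bound: "(t::real) \<le> 1 + t^2"
proof (cases "t \<le> 1")
  case True then show ?thesis using zero_le_power2[of t] by linarith
next
  case False
  then have "t \<le> t * t" by (simp add: mult_le_cancel_left1)
  then show ?thesis by (simp add: power2_eq_square)
qed

lemma fst_borel[measurable]: "fst \<in> borel_measurable (borel :: ('a::second_countable_topology \<times> 'b::second_countable_topology) measure)"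
  using measurable_fst[of "borel::'a measure" "borel::'b measure"] by (simp add: borel_prod)

lemma snd_borel[measurable]: "snd \<in> borel_measurable (borel :: ('a::second_countable_topology \<times> 'b::second_countable_topology) measure)"
  using measurable_snd[of "borel::'a measure" "borel::'b measure"] by (simp add: borel_prod)

lemma meas_cong: "sets M = sets borel \<Longrightarrow> f \<in> borel_measurable borel \<Longrightarrow> f \<in> borel_measurable M"
  using measurable_cong_sets[of M borel borel borel] by simp

lemma P2D:
  assumes "p \<in> P2"
  shows "prob_space p" "sets p = sets borel" "space p = UNIV"
    "integrable p (\<lambda>y. (norm y)^2)" "integrable p (\<lambda>y. norm y)" "integrable p (\<lambda>y. y)"
proof -
  show pp: "prob_space p" and sp: "sets p = sets borel" and i2: "integrable p (\<lambda>y. (norm y)^2)"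
    using assms by (auto simp: P2_def)
  show "space p = UNIV" using sets_eq_imp_space_eq[OF sp] by simp
  interpret prob_space p by (rule pp)
  have i1: "integrable p (\<lambda>y. 1 + (norm y)^2)" using i2 by simp
  show i3: "integrable p (\<lambda>y. norm y)"
  proof (rule Bochner_Integration.integrable_bound[OF i1])
    show "(\<lambda>y. norm y) \<in> borel_measurable p" by (rule meas_cong[OF sp]) simp
    show "AE y in p. norm (norm y) \<le> norm (1 + (norm y)^2)"
    proof (intro AE_I2)
      fix y :: 'a
      have "norm y \<le> 1 + (norm y)^2" by (rule sq_bound)
      moreover have "0 \<le> 1 + (norm y)^2" by (simp add: add_nonneg_nonneg)
      ultimately show "norm (norm y) \<le> norm (1 + (norm y)^2)" by simp
    qed
  qed
  show "integrable p (\<lambda>y. y)"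
  proof (rule Bochner_Integration.integrable_bound[OF i3])
    show "(\<lambda>y. y) \<in> borel_measurable p" by (rule meas_cong[OF sp]) simp
    show "AE y in p. norm y \<le> norm (norm y)" by simp
  qed
qed

lemma L2_inner:
  fixes f g :: "'b \<Rightarrow> 'a::euclidean_space"
  assumes fm: "f \<in> borel_measurable M" and gm: "g \<in> borel_measurable M"
    and fi: "integrable M (\<lambda>x. (norm (f x))^2)" and gi: "integrable M (\<lambda>x. (norm (g x))^2)"
  shows "integrable M (\<lambda>x. f x \<bullet> g x)"
proof (rule Bochner_Integration.integrable_bound[where f="\<lambda>x. (norm (f x))^2 + (norm (g x))^2"])
  show "integrable M (\<lambda>x. (norm (f x))^2 + (norm (g x))^2)" using fi gi by simp
  show "(\<lambda>x. f x \<bullet> g x) \<in> borel_measurable M" using fm gm by measurable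
  show "AE x in M. norm (f x \<bullet> g x) \<le> norm ((norm (f x))^2 + (norm (g x))^2)"
  proof (intro AE_I2)
    fix x
    have "norm (f x \<bullet> g x) \<le> norm (f x) * norm (g x)" using Cauchy_Schwarz_ineq2 by simp
    also have "\<dots> \<le> (norm (f x))^2 + (norm (g x))^2"
    proof -
      have "0 \<le> (norm (f x) - norm (g x))^2" by simp
      then have "2 * (norm (f x) * norm (g x)) \<le> (norm (f x))^2 + (norm (g x))^2"
        by (simp add: power2_diff)
      moreover have "0 \<le> norm (f x) * norm (g x)" by simp
      ultimately show ?thesis by linarith
    qed
    finally show "norm (f x \<bullet> g x) \<le> norm ((norm (f x))^2 + (norm (g x))^2)" by simp
  qed
qed

lemma coupling_facts:
  assumes "\<pi> \<in> couplings p q"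
  shows "prob_space \<pi>" "sets \<pi> = sets borel" "space \<pi> = UNIV" "fst \<in> \<pi> \<rightarrow>\<^sub>M borel"
    "snd \<in> \<pi> \<rightarrow>\<^sub>M borel" "distr \<pi> borel fst = p" "distr \<pi> borel snd = q"
proof -
  show sp: "sets \<pi> = sets borel" and "prob_space \<pi>" "distr \<pi> borel fst = p" "distr \<pi> borel snd = q"
    using assms by (auto simp: couplings_def)
  show "space \<pi> = UNIV" using sets_eq_imp_space_eq[OF sp] by simp
  show "fst \<in> \<pi> \<rightarrow>\<^sub>M borel" by (rule meas_cong[OF sp fst_borel])
  show "snd \<in> \<pi> \<rightarrow>\<^sub>M borel" by (rule meas_cong[OF sp snd_borel])
qed

lemma coupling_fst:
  fixes f :: "'a::euclidean_space \<Rightarrow> real"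
  assumes \<pi>: "\<pi> \<in> couplings p q" and f: "f \<in> borel_measurable borel" and i: "integrable p f"
  shows "integrable \<pi> (\<lambda>w. f (fst w))" "(\<integral>w. f (fst w) \<partial>\<pi>) = (\<integral>y. f y \<partial>p)"
proof -
  note c = coupling_facts[OF \<pi>]
  show "integrable \<pi> (\<lambda>w. f (fst w))"
    using integrable_distr_eq[OF c(4) f] i c(6) by simp
  show "(\<integral>w. f (fst w) \<partial>\<pi>) = (\<integral>y. f y \<partial>p)"
    using integral_distr[OF c(4) f] c(6) by simp
qed

lemma coupling_snd:
  fixes f :: "'a::euclidean_space \<Rightarrow> real"
  assumes \<pi>: "\<pi> \<in> couplings p q" and f: "f \<in> borel_measurable borel" and i: "integrable q f"
  shows "integrable \<pi> (\<lambda>w. f (snd w))" "(\<integral>w. f (snd w) \<partial>\<pi>) = (\<integral>y. f y \<partial>q)"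
proof -
  note c = coupling_facts[OF \<pi>]
  show "integrable \<pi> (\<lambda>w. f (snd w))"
    using integrable_distr_eq[OF c(5) f] i c(7) by simp
  show "(\<integral>w. f (snd w) \<partial>\<pi>) = (\<integral>y. f y \<partial>q)"
    using integral_distr[OF c(5) f] c(7) by simp
qed

lemma coupling_AE_fst:
  assumes \<pi>: "\<pi> \<in> couplings p q" and a: "AE y in p. P y" shows "AE w in \<pi>. P (fst w)"
proof -
  have "AE y in distr \<pi> borel fst. P y" unfolding coupling_facts(6)[OF \<pi>] by (rule a)
  then show ?thesis by (rule AE_distrD[OF coupling_facts(4)[OF \<pi>]])
qed

lemma coupling_AE_snd:
  assumes \<pi>: "\<pi> \<in> couplings p q" and a: "AE y in q. P y" shows "AE w in \<pi>. P (snd w)"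
proof -
  have "AE y in distr \<pi> borel snd. P y" unfolding coupling_facts(7)[OF \<pi>] by (rule a)
  then show ?thesis by (rule AE_distrD[OF coupling_facts(5)[OF \<pi>]])
qed

lemma coupling_inner:
  fixes p q :: "'a::euclidean_space measure"
  assumes \<pi>: "\<pi> \<in> couplings p q" and p: "p \<in> P2" and q: "q \<in> P2"
  shows "integrable \<pi> (\<lambda>w. fst w \<bullet> snd w)"
proof (rule L2_inner)
  note c = coupling_facts[OF \<pi>]
  show "fst \<in> borel_measurable \<pi>" "snd \<in> borel_measurable \<pi>" using c(4,5) by auto
  show "integrable \<pi> (\<lambda>x. (norm (fst x))^2)"
    by (rule coupling_fst(1)[OF \<pi> _ P2D(4)[OF p]]) (intro borel_measurable_continuous_onI continuous_intros)
  show "integrable \<pi> (\<lambda>x. (norm (snd x))^2)"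
    by (rule coupling_snd(1)[OF \<pi> _ P2D(4)[OF q]]) (intro borel_measurable_continuous_onI continuous_intros)
qed




declare conj_meas[measurable]

locale setting =
  fixes q :: "'a::euclidean_space measure" and \<psi> :: "'a \<Rightarrow> ereal"
    and x yhat :: 'a and G :: "'a \<Rightarrow> 'a"
  assumes q: "q \<in> P2"
    and psi_ninf: "\<forall>y. \<psi> y \<noteq> -\<infinity>" and psi_lsc: "elsc \<psi>"
    and G_meas[measurable]: "G \<in> borel_measurable borel"
    and G_grad: "AE z in q. has_egradient (conj \<psi>) (yhat + z) (G z)"
    and phat: "distr q borel G \<in> P2x x"
begin

definition "Sf z = real_of_ereal (conj \<psi> (yhat + z))"
definition "psr y = real_of_ereal (\<psi> y)"
definition "Z = {z. has_egradient (conj \<psi>) (yhat + z) (G z)}"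
definition "C = x \<bullet> yhat - (\<integral>z. Sf z \<partial>q)"

lemma qP: "prob_space q" "sets q = sets borel" "space q = UNIV"
  by (rule P2D[OF q])+

lemma psi_meas[measurable]: "\<psi> \<in> borel_measurable borel"
  using elsc_meas[OF psi_lsc] .

lemma Sf_meas[measurable]: "Sf \<in> borel_measurable borel"
  unfolding Sf_def by measurable

lemma psr_meas[measurable]: "psr \<in> borel_measurable borel"
  unfolding psr_def by measurable

lemma G_q: "G \<in> q \<rightarrow>\<^sub>M borel" by (rule meas_cong[OF qP(2) G_meas])

lemma ph_P2: "distr q borel G \<in> P2" and ph_bary: "(\<integral>y. y \<partial>distr q borel G) = x"
  using phat unfolding P2x_def by blast+

lemma G_L2: "integrable q (\<lambda>z. (norm (G z))^2)"
proof -
  have m: "(\<lambda>y::'a. (norm y)^2) \<in> borel_measurable borel" by measurable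
  show ?thesis using integrable_distr_eq[OF G_q m] P2D(4)[OF ph_P2] by blast
qed

lemma G_int: "integrable q G" and G_bary: "(\<integral>z. G z \<partial>q) = x"
proof -
  show "integrable q G"
    using integrable_distr_eq[OF G_q measurable_ident] P2D(6)[OF ph_P2] by (simp add: id_def)
  show "(\<integral>z. G z \<partial>q) = x"
    using integral_distr[OF G_q measurable_ident] ph_bary by (simp add: id_def)
qed

lemma AEZ: "AE z in q. z \<in> Z" using G_grad by (simp add: Z_def)

lemma Sf_fin: "z \<in> Z \<Longrightarrow> conj \<psi> (yhat + z) = ereal (Sf z)"
  unfolding Z_def Sf_def using egrad_finite by blast

lemma Eq: "z \<in> Z \<Longrightarrow> \<psi> (G z) = ereal ((yhat + z) \<bullet> G z - Sf z)"
  unfolding Sf_def Z_def using E_lemma[OF psi_lsc psi_ninf] by blast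

lemma exZ: "\<exists>z0. z0 \<in> Z"
proof (rule ccontr)
  assume "\<nexists>z0. z0 \<in> Z"
  then have "AE z in q. False" using AEZ by simp
  then show False using prob_space.AE_False[OF qP(1)] by simp
qed

lemma minor: "\<exists>w0 c0. \<forall>y. ereal (w0 \<bullet> y - c0) \<le> \<psi> y"
proof -
  obtain z0 where z0: "z0 \<in> Z" using exZ by blast
  have "ereal ((yhat + z0) \<bullet> y - Sf z0) \<le> \<psi> y" for y
  proof (cases "\<psi> y")
    case (real a)
    have "ereal ((yhat + z0) \<bullet> y) - \<psi> y \<le> conj \<psi> (yhat + z0)" by (rule FY)
    then show ?thesis using real Sf_fin[OF z0] by simp
  qed (use psi_ninf in auto)
  then show ?thesis by blast
qed

lemma exdom: "\<exists>y0 b0. \<psi> y0 = ereal b0"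
proof (rule ccontr)
  assume "\<nexists>y0 b0. \<psi> y0 = ereal b0"
  then have inf: "\<psi> y = \<infinity>" for y using psi_ninf by (cases "\<psi> y") auto
  obtain z0 where z0: "z0 \<in> Z" using exZ by blast
  have "conj \<psi> (yhat + z0) = -\<infinity>" unfolding conj_def using inf by simp
  then show False using Sf_fin[OF z0] by simp
qed

lemma conj_lower: "\<psi> y0 = ereal b0 \<Longrightarrow> ereal (v \<bullet> y0 - b0) \<le> conj \<psi> v"
  using FY[of v y0 \<psi>] by simp

lemma id_L2: "integrable q (\<lambda>z. (norm z)^2)" using P2D(4)[OF q] .
lemma id_int: "integrable q (\<lambda>z. z)" using P2D(6)[OF q] .

lemma zG_int: "integrable q (\<lambda>z. z \<bullet> G z)"
  by (rule L2_inner[OF _ _ id_L2 G_L2]) (use G_q qP(2) in \<open>auto intro: meas_cong\<close>)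

lemma Sf_int: "integrable q Sf"
proof -
  obtain w0 c0 where mi: "\<And>y. ereal (w0 \<bullet> y - c0) \<le> \<psi> y" using minor by blast
  obtain y0 b0 where y0: "\<psi> y0 = ereal b0" using exdom by blast
  define l where "l z = yhat \<bullet> y0 + z \<bullet> y0 - b0" for z
  define u where "u z = yhat \<bullet> G z + z \<bullet> G z - w0 \<bullet> G z + c0" for z
  have li: "integrable q l" unfolding l_def using id_int qP(1)
    by (intro Bochner_Integration.integrable_diff Bochner_Integration.integrable_add
        finite_measure.integrable_const prob_space.finite_measure) auto
  have ui: "integrable q u" unfolding u_def using G_int zG_int qP(1)
    by (intro Bochner_Integration.integrable_diff Bochner_Integration.integrable_add
        finite_measure.integrable_const prob_space.finite_measure integrable_inner_right) auto
  have bnd: "l z \<le> Sf z \<and> Sf z \<le> u z" if z: "z \<in> Z" for z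
  proof
    have "ereal ((yhat + z) \<bullet> y0 - b0) \<le> conj \<psi> (yhat + z)" by (rule conj_lower[OF y0])
    then show "l z \<le> Sf z" using Sf_fin[OF z] by (simp add: l_def inner_add_left)
    have "ereal (w0 \<bullet> G z - c0) \<le> \<psi> (G z)" by (rule mi)
    moreover have "G z \<bullet> (yhat + z) = yhat \<bullet> G z + z \<bullet> G z"
      by (simp add: inner_add_right inner_commute)
    ultimately show "Sf z \<le> u z" using Eq[OF z] by (simp add: u_def inner_commute)
  qed
  show ?thesis
  proof (rule Bochner_Integration.integrable_bound[where f="\<lambda>z. \<bar>l z\<bar> + \<bar>u z\<bar>"])
    show "integrable q (\<lambda>z. \<bar>l z\<bar> + \<bar>u z\<bar>)" using li ui by auto
    show "Sf \<in> borel_measurable q" by (rule meas_cong[OF qP(2) Sf_meas])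
    show "AE z in q. norm (Sf z) \<le> norm (\<bar>l z\<bar> + \<bar>u z\<bar>)"
      using AEZ
    proof eventually_elim
      case (elim z)
      have a: "l z \<le> Sf z" "Sf z \<le> u z" using bnd[OF elim] by auto
      have "\<bar>Sf z\<bar> \<le> \<bar>l z\<bar> + \<bar>u z\<bar>"
        using a abs_ge_self[of "l z"] abs_ge_minus_self[of "l z"] abs_ge_self[of "u z"]
          abs_ge_minus_self[of "u z"] unfolding abs_le_iff by linarith
      then show ?case by simp
    qed
  qed
qed

end




context setting begin

abbreviation "ph \<equiv> distr q borel G"

lemma mq: "f \<in> borel_measurable borel \<Longrightarrow> f \<in> borel_measurable q"
  by (rule meas_cong[OF qP(2)])

lemma psr_G_ae: "AE z in q. psr (G z) = (yhat + z) \<bullet> G z - Sf z"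
  using AEZ by eventually_elim (simp add: psr_def Eq)

lemma rhs_int: "integrable q (\<lambda>z. (yhat + z) \<bullet> G z - Sf z)"
proof -
  have "integrable q (\<lambda>z. yhat \<bullet> G z + z \<bullet> G z - Sf z)"
    using G_int zG_int Sf_int
    by (intro Bochner_Integration.integrable_diff Bochner_Integration.integrable_add integrable_inner_right)
  then show ?thesis by (simp add: inner_add_left)
qed

lemma psrG_int: "integrable q (\<lambda>z. psr (G z))"
proof (rule integrable_cong_AE_imp[OF rhs_int])
  show "(\<lambda>z. psr (G z)) \<in> borel_measurable q" by (rule mq) measurable
  show "AE z in q. (yhat + z) \<bullet> G z - Sf z = psr (G z)"
    using psr_G_ae by eventually_elim simp
qed

lemma ph_int: "integrable ph psr"
  using integrable_distr_eq[OF G_q psr_meas] psrG_int by blast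

lemma ph_ae: "AE y in ph. \<psi> y = ereal (psr y)"
proof -
  have s: "{y \<in> space borel. \<psi> y = ereal (psr y)} \<in> sets borel" by measurable
  have "AE z in q. \<psi> (G z) = ereal (psr (G z))"
    using AEZ by eventually_elim (simp add: psr_def Eq)
  then show ?thesis using AE_distr_iff[OF G_q s] by blast
qed

lemma rhs_integral: "(\<integral>z. (yhat + z) \<bullet> G z - Sf z \<partial>q) = yhat \<bullet> x + (\<integral>z. z \<bullet> G z \<partial>q) - (\<integral>z. Sf z \<partial>q)"
proof -
  have "(\<integral>z. (yhat + z) \<bullet> G z - Sf z \<partial>q) = (\<integral>z. yhat \<bullet> G z + z \<bullet> G z - Sf z \<partial>q)"
    by (simp add: inner_add_left)
  also have "\<dots> = (\<integral>z. yhat \<bullet> G z + z \<bullet> G z \<partial>q) - (\<integral>z. Sf z \<partial>q)"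
    using G_int zG_int Sf_int
    by (intro Bochner_Integration.integral_diff Bochner_Integration.integrable_add integrable_inner_right)
  also have "(\<integral>z. yhat \<bullet> G z + z \<bullet> G z \<partial>q) = (\<integral>z. yhat \<bullet> G z \<partial>q) + (\<integral>z. z \<bullet> G z \<partial>q)"
    using G_int zG_int
    by (intro Bochner_Integration.integral_add integrable_inner_right)
  also have "(\<integral>z. yhat \<bullet> G z \<partial>q) = yhat \<bullet> x"
    using G_int G_bary by simp
  finally show ?thesis .
qed

lemma ph_eint: "eint ph \<psi> = ereal (yhat \<bullet> x + (\<integral>z. z \<bullet> G z \<partial>q) - (\<integral>z. Sf z \<partial>q))"
proof -
  have "eint ph \<psi> = ereal (\<integral>y. psr y \<partial>ph)" by (rule eint_real[OF ph_ae ph_int])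
  also have "(\<integral>y. psr y \<partial>ph) = (\<integral>z. psr (G z) \<partial>q)" by (rule integral_distr[OF G_q psr_meas])
  also have "\<dots> = (\<integral>z. (yhat + z) \<bullet> G z - Sf z \<partial>q)"
  proof (rule integral_cong_AE)
    show "(\<lambda>z. psr (G z)) \<in> borel_measurable q" by (rule mq) measurable
    show "(\<lambda>z. (yhat + z) \<bullet> G z - Sf z) \<in> borel_measurable q" by (rule mq) measurable
  qed (rule psr_G_ae)
  finally show ?thesis using rhs_integral by simp
qed

definition "pi0 = distr q borel (\<lambda>z. (G z, z))"

lemma pair_meas: "(\<lambda>z. (G z, z)) \<in> q \<rightarrow>\<^sub>M (borel :: ('a \<times> 'a) measure)"
proof -
  have i: "(\<lambda>z. z) \<in> q \<rightarrow>\<^sub>M borel" by (rule mq) simp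
  have "(\<lambda>z. (G z, z)) \<in> q \<rightarrow>\<^sub>M borel \<Otimes>\<^sub>M borel" by (rule measurable_Pair[OF G_q i])
  then show ?thesis by (simp add: borel_prod)
qed

lemma pi0_coupl: "pi0 \<in> couplings ph q"
  unfolding couplings_def pi0_def
proof (intro CollectI conjI)
  show "prob_space (distr q borel (\<lambda>z. (G z, z)))"
    by (rule prob_space.prob_space_distr[OF qP(1) pair_meas])
  show "sets (distr q borel (\<lambda>z. (G z, z))) = sets borel" by simp
  have "distr (distr q borel (\<lambda>z. (G z, z))) borel fst = distr q borel (fst \<circ> (\<lambda>z. (G z, z)))"
    by (rule distr_distr[OF fst_borel pair_meas])
  then show "distr (distr q borel (\<lambda>z. (G z, z))) borel fst = ph" by (simp add: comp_def)
  have "distr (distr q borel (\<lambda>z. (G z, z))) borel snd = distr q borel (snd \<circ> (\<lambda>z. (G z, z)))"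
    by (rule distr_distr[OF snd_borel pair_meas])
  also have "\<dots> = distr q borel (\<lambda>z. z)" by (simp add: comp_def)
  also have "\<dots> = q" by (rule distr_id2) (simp add: qP(2))
  finally show "distr (distr q borel (\<lambda>z. (G z, z))) borel snd = q" .
qed

lemma pi0_integral: "(\<integral>w. fst w \<bullet> snd w \<partial>pi0) = (\<integral>z. G z \<bullet> z \<partial>q)"
proof -
  have m: "(\<lambda>w::'a\<times>'a. fst w \<bullet> snd w) \<in> borel_measurable borel" by measurable
  show ?thesis unfolding pi0_def using integral_distr[OF pair_meas m] by simp
qed

lemma ereal_minus_le: "ereal m \<le> M \<Longrightarrow> ereal E - M \<le> ereal (E - m)"
  by (cases M) auto

lemma val_ph_le: "eint ph \<psi> - MCov ph q \<le> ereal C"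
proof -
  have "ereal (\<integral>w. fst w \<bullet> snd w \<partial>pi0) \<le> MCov ph q"
    unfolding MCov_def by (rule SUP_upper[OF pi0_coupl])
  then have M: "ereal (\<integral>z. z \<bullet> G z \<partial>q) \<le> MCov ph q"
    unfolding pi0_integral by (simp add: inner_commute)
  have "eint ph \<psi> - MCov ph q \<le> ereal ((yhat \<bullet> x + (\<integral>z. z \<bullet> G z \<partial>q) - (\<integral>z. Sf z \<partial>q)) - (\<integral>z. z \<bullet> G z \<partial>q))"
    unfolding ph_eint by (rule ereal_minus_le[OF M])
  also have "\<dots> = ereal C" by (simp add: C_def inner_commute)
  finally show ?thesis .
qed


lemma psr_eq: "psr = (\<lambda>y. real_of_ereal (\<psi> y))" by (rule ext) (simp add: psr_def)

lemma val_ge: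
  assumes p: "p \<in> P2x x" shows "ereal C \<le> eint p \<psi> - MCov p q"
proof (cases "eint p \<psi> = \<infinity>")
  case True then show ?thesis by (cases "MCov p q") auto
next
  case False
  have pP: "p \<in> P2" and pb: "(\<integral>y. y \<partial>p) = x" using p unfolding P2x_def by blast+
  note pD = P2D[OF pP]
  obtain w0 c0 where mi: "\<And>y. ereal (w0 \<bullet> y - c0) \<le> \<psi> y" using minor by blast
  have lb: "\<And>y. y \<in> space p \<Longrightarrow> ereal (w0 \<bullet> y - c0) \<le> \<psi> y" using mi by blast
  have ai: "integrable p (\<lambda>y. w0 \<bullet> y - c0)" using pD(6) pD(1)
    by (intro Bochner_Integration.integrable_diff integrable_inner_right finite_measure.integrable_const
        prob_space.finite_measure)
  have fm: "\<psi> \<in> borel_measurable p" by (rule meas_cong[OF pD(2) psi_meas])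
  note EL = eint_lower[OF fm lb ai False]
  define E where "E = (\<integral>y. psr y \<partial>p)"
  have pi: "integrable p psr" using EL(1) by (simp add: psr_eq)
  have eE: "eint p \<psi> = ereal E" using EL(3) by (simp add: E_def psr_eq)
  have aeP: "AE y in p. \<psi> y = ereal (psr y)" using EL(2) by (simp add: psr_eq)
  have yi: "integrable p (\<lambda>y. yhat \<bullet> y)" using pD(6) by (rule integrable_inner_right)
  have ym: "(\<lambda>y::'a. yhat \<bullet> y) \<in> borel_measurable borel" by measurable
  have bound: "(\<integral>w. fst w \<bullet> snd w \<partial>\<pi>) \<le> E - C" if \<pi>: "\<pi> \<in> couplings p q" for \<pi>
  proof -
    have ae: "AE w in \<pi>. fst w \<bullet> snd w \<le> psr (fst w) + Sf (snd w) - yhat \<bullet> fst w"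
      using coupling_AE_fst[OF \<pi> aeP] coupling_AE_snd[OF \<pi> AEZ]
    proof eventually_elim
      case (elim w)
      obtain y z where w: "w = (y, z)" by (cases w)
      have "ereal ((yhat + z) \<bullet> y) - \<psi> y \<le> conj \<psi> (yhat + z)" by (rule FY)
      moreover have "\<psi> y = ereal (psr y)" using elim w by simp
      moreover have "conj \<psi> (yhat + z) = ereal (Sf z)" using elim w Sf_fin by simp
      ultimately have h: "(yhat + z) \<bullet> y - psr y \<le> Sf z" by simp
      have eq: "(yhat + z) \<bullet> y = yhat \<bullet> y + y \<bullet> z" by (simp add: inner_add_left inner_commute[of z y])
      have "y \<bullet> z \<le> psr y + Sf z - yhat \<bullet> y" using eq h by linarith
      then show ?case using w by simp
    qed
    have i1: "integrable \<pi> (\<lambda>w. psr (fst w))" by (rule coupling_fst(1)[OF \<pi> psr_meas pi])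
    have i2: "integrable \<pi> (\<lambda>w. Sf (snd w))" by (rule coupling_snd(1)[OF \<pi> Sf_meas Sf_int])
    have i3: "integrable \<pi> (\<lambda>w. yhat \<bullet> fst w)" by (rule coupling_fst(1)[OF \<pi> ym yi])
    have "(\<integral>w. fst w \<bullet> snd w \<partial>\<pi>) \<le> (\<integral>w. psr (fst w) + Sf (snd w) - yhat \<bullet> fst w \<partial>\<pi>)"
      by (rule integral_mono_AE[OF coupling_inner[OF \<pi> pP q] _ ae])
        (intro Bochner_Integration.integrable_diff Bochner_Integration.integrable_add i1 i2 i3)
    also have "\<dots> = (\<integral>w. psr (fst w) + Sf (snd w) \<partial>\<pi>) - (\<integral>w. yhat \<bullet> fst w \<partial>\<pi>)"
      by (intro Bochner_Integration.integral_diff Bochner_Integration.integrable_add i1 i2 i3)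
    also have "(\<integral>w. psr (fst w) + Sf (snd w) \<partial>\<pi>) = (\<integral>w. psr (fst w) \<partial>\<pi>) + (\<integral>w. Sf (snd w) \<partial>\<pi>)"
      by (intro Bochner_Integration.integral_add i1 i2)
    also have "(\<integral>w. psr (fst w) \<partial>\<pi>) = E"
      unfolding E_def by (rule coupling_fst(2)[OF \<pi> psr_meas pi])
    also have "(\<integral>w. Sf (snd w) \<partial>\<pi>) = (\<integral>z. Sf z \<partial>q)"
      by (rule coupling_snd(2)[OF \<pi> Sf_meas Sf_int])
    also have "(\<integral>w. yhat \<bullet> fst w \<partial>\<pi>) = (\<integral>y. yhat \<bullet> y \<partial>p)"
      by (rule coupling_fst(2)[OF \<pi> ym yi])
    also have "(\<integral>y. yhat \<bullet> y \<partial>p) = yhat \<bullet> x" using pD(6) pb by simp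
    finally show ?thesis by (simp add: C_def inner_commute)
  qed
  have "MCov p q \<le> ereal (E - C)" unfolding MCov_def by (rule SUP_least) (use bound in auto)
  then show ?thesis using eE by (cases "MCov p q") auto
qed

lemma part2_le: "ereal (x \<bullet> y) - eint q (\<lambda>z. conj \<psi> (y + z)) \<le> ereal C"
proof (cases "eint q (\<lambda>z. conj \<psi> (y + z)) = \<infinity>")
  case True then show ?thesis by simp
next
  case False
  obtain y0 b0 where y0: "\<psi> y0 = ereal b0" using exdom by blast
  have fm: "(\<lambda>z. conj \<psi> (y + z)) \<in> borel_measurable q" by (rule mq) measurable
  have lb: "\<And>z. z \<in> space q \<Longrightarrow> ereal ((y + z) \<bullet> y0 - b0) \<le> conj \<psi> (y + z)"
    using conj_lower[OF y0] by blast
  have ai0: "integrable q (\<lambda>z. y \<bullet> y0 + z \<bullet> y0 - b0)" using id_int qP(1)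
    by (intro Bochner_Integration.integrable_diff Bochner_Integration.integrable_add
        finite_measure.integrable_const prob_space.finite_measure integrable_inner_left)
  have ai: "integrable q (\<lambda>z. (y + z) \<bullet> y0 - b0)" using ai0 by (simp add: inner_add_left)
  note EL = eint_lower[OF fm lb ai False]
  define Sy where "Sy = (\<lambda>z. real_of_ereal (conj \<psi> (y + z)))"
  have Syi: "integrable q Sy" using EL(1) by (simp add: Sy_def)
  have ee: "eint q (\<lambda>z. conj \<psi> (y + z)) = ereal (\<integral>z. Sy z \<partial>q)" using EL(3) by (simp add: Sy_def)
  have ae0: "AE z in q. z \<in> Z \<and> conj \<psi> (y + z) = ereal (Sy z)"
    using AE_conjI[OF AEZ EL(2)] unfolding Sy_def by simp
  have ae: "AE z in q. y \<bullet> G z - Sy z \<le> yhat \<bullet> G z - Sf z"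
  proof (rule AE_mp[OF ae0], intro AE_I2 impI)
    fix z assume elim: "z \<in> Z \<and> conj \<psi> (y + z) = ereal (Sy z)"
    have "ereal ((y + z) \<bullet> G z) - \<psi> (G z) \<le> conj \<psi> (y + z)" by (rule FY)
    then have "(y + z) \<bullet> G z - ((yhat + z) \<bullet> G z - Sf z) \<le> Sy z" using Eq elim by simp
    then show "y \<bullet> G z - Sy z \<le> yhat \<bullet> G z - Sf z" by (simp add: inner_add_left)
  qed
  have "(\<integral>z. y \<bullet> G z - Sy z \<partial>q) \<le> (\<integral>z. yhat \<bullet> G z - Sf z \<partial>q)"
  proof (rule integral_mono_AE[OF _ _ ae])
    show "integrable q (\<lambda>z. y \<bullet> G z - Sy z)"
      using G_int Syi by (intro Bochner_Integration.integrable_diff integrable_inner_right)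
    show "integrable q (\<lambda>z. yhat \<bullet> G z - Sf z)"
      using G_int Sf_int by (intro Bochner_Integration.integrable_diff integrable_inner_right)
  qed
  moreover have "(\<integral>z. y \<bullet> G z - Sy z \<partial>q) = y \<bullet> x - (\<integral>z. Sy z \<partial>q)"
    using G_int Syi G_bary by (subst Bochner_Integration.integral_diff) auto
  moreover have "(\<integral>z. yhat \<bullet> G z - Sf z \<partial>q) = yhat \<bullet> x - (\<integral>z. Sf z \<partial>q)"
    using G_int Sf_int G_bary by (subst Bochner_Integration.integral_diff) auto
  ultimately show ?thesis unfolding ee C_def by (simp add: inner_commute)
qed

lemma part2_eq: "ereal (x \<bullet> yhat) - eint q (\<lambda>z. conj \<psi> (yhat + z)) = ereal C"
proof -
  have "eint q (\<lambda>z. conj \<psi> (yhat + z)) = ereal (\<integral>z. Sf z \<partial>q)"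
  proof (rule eint_real[OF _ Sf_int])
    show "AE z in q. conj \<psi> (yhat + z) = ereal (Sf z)"
      by (rule AE_mp[OF AEZ], intro AE_I2 impI) (rule Sf_fin)
  qed
  then show ?thesis by (simp add: C_def)
qed

lemma part2: "ereal (x \<bullet> yhat) - eint q (\<lambda>z. conj \<psi> (yhat + z))
   = (SUP y. ereal (x \<bullet> y) - eint q (\<lambda>z. conj \<psi> (y + z)))"
proof (rule antisym)
  show "ereal (x \<bullet> yhat) - eint q (\<lambda>z. conj \<psi> (yhat + z))
     \<le> (SUP y. ereal (x \<bullet> y) - eint q (\<lambda>z. conj \<psi> (y + z)))"
    by (rule SUP_upper) simp
  show "(SUP y. ereal (x \<bullet> y) - eint q (\<lambda>z. conj \<psi> (y + z))) \<le> ereal (x \<bullet> yhat) - eint q (\<lambda>z. conj \<psi> (yhat + z))"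
    unfolding part2_eq by (rule SUP_least) (rule part2_le)
qed

lemma phi_eq: "phi \<psi> q x = ereal C" and val_ph: "eint ph \<psi> - MCov ph q = ereal C"
proof -
  have "phi \<psi> q x \<le> eint ph \<psi> - MCov ph q" unfolding phi_def by (rule INF_lower[OF phat])
  moreover have "ereal C \<le> phi \<psi> q x" unfolding phi_def by (rule INF_greatest) (rule val_ge)
  moreover have "ereal C \<le> eint ph \<psi> - MCov ph q" by (rule val_ge[OF phat])
  ultimately show "phi \<psi> q x = ereal C" "eint ph \<psi> - MCov ph q = ereal C"
    using val_ph_le by (auto intro: antisym)
qed

end



context setting begin

definition "Fc w = psr (fst w) + Sf (snd w) - yhat \<bullet> fst w - fst w \<bullet> snd w"

lemma Fc_meas[measurable]: "Fc \<in> borel_measurable borel"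
  unfolding Fc_def by measurable

lemma coupling_calc:
  assumes p: "p \<in> P2x x" and pi: "integrable p psr" and aeP: "AE y in p. \<psi> y = ereal (psr y)"
    and \<pi>: "\<pi> \<in> couplings p q"
  shows "integrable \<pi> Fc"
    "AE w in \<pi>. 0 \<le> Fc w \<and> \<psi> (fst w) = ereal (psr (fst w)) \<and> snd w \<in> Z"
    "(\<integral>w. Fc w \<partial>\<pi>) = (\<integral>y. psr y \<partial>p) - C - (\<integral>w. fst w \<bullet> snd w \<partial>\<pi>)"
proof -
  have pP: "p \<in> P2" and pb: "(\<integral>y. y \<partial>p) = x" using p unfolding P2x_def by blast+
  note pD = P2D[OF pP]
  have yi: "integrable p (\<lambda>y. yhat \<bullet> y)" using pD(6) by (rule integrable_inner_right)
  have ym: "(\<lambda>y::'a. yhat \<bullet> y) \<in> borel_measurable borel" by measurable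
  have i1: "integrable \<pi> (\<lambda>w. psr (fst w))" by (rule coupling_fst(1)[OF \<pi> psr_meas pi])
  have i2: "integrable \<pi> (\<lambda>w. Sf (snd w))" by (rule coupling_snd(1)[OF \<pi> Sf_meas Sf_int])
  have i3: "integrable \<pi> (\<lambda>w. yhat \<bullet> fst w)" by (rule coupling_fst(1)[OF \<pi> ym yi])
  have i4: "integrable \<pi> (\<lambda>w. fst w \<bullet> snd w)" by (rule coupling_inner[OF \<pi> pP q])
  show "integrable \<pi> Fc" unfolding Fc_def
    by (intro Bochner_Integration.integrable_diff Bochner_Integration.integrable_add i1 i2 i3 i4)
  show "AE w in \<pi>. 0 \<le> Fc w \<and> \<psi> (fst w) = ereal (psr (fst w)) \<and> snd w \<in> Z"
    using coupling_AE_fst[OF \<pi> aeP] coupling_AE_snd[OF \<pi> AEZ]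
  proof eventually_elim
    case (elim w)
    obtain y z where w: "w = (y, z)" by (cases w)
    have "ereal ((yhat + z) \<bullet> y) - \<psi> y \<le> conj \<psi> (yhat + z)" by (rule FY)
    moreover have "\<psi> y = ereal (psr y)" using elim w by simp
    moreover have "conj \<psi> (yhat + z) = ereal (Sf z)" using elim w Sf_fin by simp
    ultimately have h: "(yhat + z) \<bullet> y - psr y \<le> Sf z" by simp
    have eq: "(yhat + z) \<bullet> y = yhat \<bullet> y + y \<bullet> z" by (simp add: inner_add_left inner_commute[of z y])
    have "0 \<le> psr y + Sf z - yhat \<bullet> y - y \<bullet> z" using eq h by linarith
    then show ?case using w elim by (simp add: Fc_def)
  qed
  have "(\<integral>w. Fc w \<partial>\<pi>) = (\<integral>w. psr (fst w) + Sf (snd w) - yhat \<bullet> fst w \<partial>\<pi>) - (\<integral>w. fst w \<bullet> snd w \<partial>\<pi>)"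
    unfolding Fc_def
    by (intro Bochner_Integration.integral_diff Bochner_Integration.integrable_diff
        Bochner_Integration.integrable_add i1 i2 i3 i4)
  also have "(\<integral>w. psr (fst w) + Sf (snd w) - yhat \<bullet> fst w \<partial>\<pi>) = (\<integral>w. psr (fst w) + Sf (snd w) \<partial>\<pi>) - (\<integral>w. yhat \<bullet> fst w \<partial>\<pi>)"
    by (intro Bochner_Integration.integral_diff Bochner_Integration.integrable_add i1 i2 i3)
  also have "(\<integral>w. psr (fst w) + Sf (snd w) \<partial>\<pi>) = (\<integral>w. psr (fst w) \<partial>\<pi>) + (\<integral>w. Sf (snd w) \<partial>\<pi>)"
    by (intro Bochner_Integration.integral_add i1 i2)
  also have "(\<integral>w. psr (fst w) \<partial>\<pi>) = (\<integral>y. psr y \<partial>p)"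
    by (rule coupling_fst(2)[OF \<pi> psr_meas pi])
  also have "(\<integral>w. Sf (snd w) \<partial>\<pi>) = (\<integral>z. Sf z \<partial>q)"
    by (rule coupling_snd(2)[OF \<pi> Sf_meas Sf_int])
  also have "(\<integral>w. yhat \<bullet> fst w \<partial>\<pi>) = (\<integral>y. yhat \<bullet> y \<partial>p)"
    by (rule coupling_fst(2)[OF \<pi> ym yi])
  also have "(\<integral>y. yhat \<bullet> y \<partial>p) = yhat \<bullet> x" using pD(6) pb by simp
  finally show "(\<integral>w. Fc w \<partial>\<pi>) = (\<integral>y. psr y \<partial>p) - C - (\<integral>w. fst w \<bullet> snd w \<partial>\<pi>)"
    by (simp add: C_def inner_commute)
qed

lemma F_small:
  assumes p: "p \<in> P2x x" and val: "eint p \<psi> - MCov p q = ereal C" and e: "0 < e"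
  shows "\<exists>\<pi>\<in>couplings p q. integrable \<pi> Fc \<and>
    (AE w in \<pi>. 0 \<le> Fc w \<and> \<psi> (fst w) = ereal (psr (fst w)) \<and> snd w \<in> Z) \<and> (\<integral>w. Fc w \<partial>\<pi>) < e"
proof -
  have pP: "p \<in> P2" using p unfolding P2x_def by blast
  note pD = P2D[OF pP]
  have ninf: "eint p \<psi> \<noteq> \<infinity>"
  proof
    assume "eint p \<psi> = \<infinity>"
    then have "eint p \<psi> - MCov p q = \<infinity>" by (cases "MCov p q") auto
    then show False using val by simp
  qed
  obtain w0 c0 where mi: "\<And>y. ereal (w0 \<bullet> y - c0) \<le> \<psi> y" using minor by blast
  have lb: "\<And>y. y \<in> space p \<Longrightarrow> ereal (w0 \<bullet> y - c0) \<le> \<psi> y" using mi by blast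
  have ai: "integrable p (\<lambda>y. w0 \<bullet> y - c0)" using pD(6) pD(1)
    by (intro Bochner_Integration.integrable_diff integrable_inner_right finite_measure.integrable_const
        prob_space.finite_measure)
  have fm: "\<psi> \<in> borel_measurable p" by (rule meas_cong[OF pD(2) psi_meas])
  note EL = eint_lower[OF fm lb ai ninf]
  define E where "E = (\<integral>y. psr y \<partial>p)"
  have pi: "integrable p psr" using EL(1) by (simp add: psr_eq)
  have eE: "eint p \<psi> = ereal E" using EL(3) by (simp add: E_def psr_eq)
  have aeP: "AE y in p. \<psi> y = ereal (psr y)" using EL(2) by (simp add: psr_eq)
  have MC: "MCov p q = ereal (E - C)"
    using val eE by (cases "MCov p q") auto
  have "ereal (E - C - e) < MCov p q" using MC e by simp
  then obtain \<pi> where \<pi>: "\<pi> \<in> couplings p q" and lt: "ereal (E - C - e) < ereal (\<integral>w. fst w \<bullet> snd w \<partial>\<pi>)"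
    unfolding MCov_def by (auto simp: less_SUP_iff)
  note cc = coupling_calc[OF p pi aeP \<pi>]
  have "(\<integral>w. Fc w \<partial>\<pi>) < e" using cc(3) lt by (simp add: E_def)
  then show ?thesis using \<pi> cc(1,2) by blast
qed


lemma bad_small:
  assumes p: "p \<in> P2x x" and val: "eint p \<psi> - MCov p q = ereal C" and \<delta>: "0 < \<delta>" and \<eta>: "0 < \<eta>"
  shows "\<exists>\<pi>\<in>couplings p q. measure \<pi> {w. \<delta> \<le> norm (fst w - G (snd w))} \<le> \<eta>"
proof -
  define V :: "'a set" where "V = Basis \<union> uminus ` Basis"
  have Vfin: "finite V" unfolding V_def by simp
  have Vn: "\<And>v. v \<in> V \<Longrightarrow> norm v = 1" unfolding V_def by auto
  define dd where "dd = real DIM('a)"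
  have dd: "dd > 0" unfolding dd_def by simp
  define \<delta>' where "\<delta>' = \<delta> / dd"
  have \<delta>': "\<delta>' > 0" using \<delta> dd by (simp add: \<delta>'_def)
  define t :: "nat \<Rightarrow> real" where "t k = inverse (real (Suc k))" for k
  have tpos: "\<And>k. 0 < t k" by (simp add: t_def)
  define B where "B k = {z. \<exists>v\<in>V. ereal (Sf z + t k * (G z \<bullet> v) + t k * \<delta>' / 2) \<le> conj \<psi> (yhat + z + t k *\<^sub>R v)}" for k
  have Bs: "B k \<in> sets borel" for k
  proof -
    have "B k = (\<Union>v\<in>V. {z. ereal (Sf z + t k * (G z \<bullet> v) + t k * \<delta>' / 2) \<le> conj \<psi> (yhat + z + t k *\<^sub>R v)})"
      unfolding B_def by auto
    also have "\<dots> \<in> sets borel" by (rule sets.finite_UN[OF Vfin]) measurable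
    finally show ?thesis .
  qed
  have Bq: "B k \<in> sets q" for k using Bs qP(2) by simp
  have evB: "eventually (\<lambda>k. z \<notin> B k) sequentially" if z: "z \<in> Z" for z
  proof -
    have gr: "has_egradient (conj \<psi>) (yhat + z) (G z)" using z by (simp add: Z_def)
    have e4: "0 < \<delta>'/4" using \<delta>' by simp
    obtain r where r: "r > 0" and rH: "\<forall>h. norm h < r \<longrightarrow> conj \<psi> (yhat + z + h) = ereal (real_of_ereal (conj \<psi> (yhat + z + h))) \<and>
        real_of_ereal (conj \<psi> (yhat + z + h)) \<le> real_of_ereal (conj \<psi> (yhat + z)) + G z \<bullet> h + \<delta>'/4 * norm h"
      using DER[OF gr e4] by blast
    have "eventually (\<lambda>k. t k < r) sequentially" unfolding t_def using r Archimedean_eventually_inverse by blast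
    then show ?thesis
    proof (rule eventually_mono)
      fix k assume tk: "t k < r"
      show "z \<notin> B k"
      proof
        assume "z \<in> B k"
        then obtain v where v: "v \<in> V"
          and le: "ereal (Sf z + t k * (G z \<bullet> v) + t k * \<delta>' / 2) \<le> conj \<psi> (yhat + z + t k *\<^sub>R v)"
          unfolding B_def by blast
        have nh: "norm (t k *\<^sub>R v) = t k" using Vn[OF v] tpos[of k] by simp
        then have hh: "norm (t k *\<^sub>R v) < r" using tk by simp
        have Fv1: "conj \<psi> (yhat + z + t k *\<^sub>R v) = ereal (real_of_ereal (conj \<psi> (yhat + z + t k *\<^sub>R v)))"
          and Fv2: "real_of_ereal (conj \<psi> (yhat + z + t k *\<^sub>R v)) \<le> Sf z + G z \<bullet> (t k *\<^sub>R v) + \<delta>'/4 * t k"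
          using rH[rule_format, OF hh] nh by (auto simp: Sf_def)
        obtain Fv where Fv: "conj \<psi> (yhat + z + t k *\<^sub>R v) = ereal Fv" using Fv1 by blast
        have "Sf z + t k * (G z \<bullet> v) + t k * \<delta>' / 2 \<le> Fv" using le Fv by simp
        moreover have "Fv \<le> Sf z + t k * (G z \<bullet> v) + \<delta>'/4 * t k" using Fv2 Fv by simp
        moreover have "0 < t k * \<delta>'" using tpos[of k] \<delta>' by simp
        moreover have "\<delta>'/4 * t k = (t k * \<delta>') / 4" by simp
        ultimately show False by linarith
      qed
    qed
  qed
  have lim: "(\<lambda>k. measure q (B k)) \<longlonglongrightarrow> 0"
  proof -
    have "(\<lambda>k. \<integral>z. indicator (B k) z \<partial>q) \<longlonglongrightarrow> (\<integral>z. (0::real) \<partial>q)"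
    proof (rule integral_dominated_convergence[where w="\<lambda>_. 1"])
      show "(\<lambda>z. 0::real) \<in> borel_measurable q" by simp
      show "\<And>k. (\<lambda>z. indicator (B k) z :: real) \<in> borel_measurable q" using Bq by simp
      show "integrable q (\<lambda>_. 1::real)"
        using qP(1) by (simp add: prob_space.finite_measure finite_measure.integrable_const)
      show "AE z in q. (\<lambda>k. indicator (B k) z :: real) \<longlonglongrightarrow> 0"
        using AEZ
      proof eventually_elim
        case (elim z)
        show ?case
          by (rule tendsto_eventually) (use evB[OF elim] in \<open>auto elim: eventually_mono\<close>)
      qed
      show "\<And>k. AE z in q. norm (indicator (B k) z :: real) \<le> 1"
        by (auto split: split_indicator)
    qed
    then show ?thesis using qP(3) by simp
  qed
  have "eventually (\<lambda>k. measure q (B k) < \<eta>/2) sequentially"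
    using lim \<eta> by (intro order_tendstoD(2)) auto
  then obtain k where k: "measure q (B k) < \<eta>/2" by (auto simp: eventually_sequentially)
  define T where "T = t k"
  have T: "0 < T" using tpos by (simp add: T_def)
  define c where "c = 2 / (T * \<delta>')"
  have c: "0 < c" using T \<delta>' by (simp add: c_def)
  have \<kappa>: "0 < T * \<delta>' * \<eta> / 4" using T \<delta>' \<eta> by simp
  obtain \<pi> where \<pi>: "\<pi> \<in> couplings p q" and Fi: "integrable \<pi> Fc"
    and Fae: "AE w in \<pi>. 0 \<le> Fc w \<and> \<psi> (fst w) = ereal (psr (fst w)) \<and> snd w \<in> Z"
    and Fl: "(\<integral>w. Fc w \<partial>\<pi>) < T * \<delta>' * \<eta> / 4"
    using F_small[OF p val \<kappa>] by blast
  note cf = coupling_facts[OF \<pi>]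
  define bad where "bad = {w. \<delta> \<le> norm (fst w - G (snd w))}"
  have badb: "bad \<in> sets borel" unfolding bad_def by measurable
  have bads: "bad \<in> sets \<pi>" using badb cf(2) by simp
  have pw: "AE w in \<pi>. indicator bad w \<le> c * Fc w + indicator (B k) (snd w)"
    using Fae
  proof eventually_elim
    case (elim w)
    obtain y z where w: "w = (y, z)" by (cases w)
    have F0: "0 \<le> Fc w" and fy: "\<psi> y = ereal (psr y)" and zZ: "z \<in> Z" using elim w by auto
    have cF0: "0 \<le> c * Fc w" using c F0 by simp
    have i0: "0 \<le> (indicator (B k) (snd w) :: real)" by (simp split: split_indicator)
    show ?case
    proof (cases "w \<in> bad")
      case False
      then have "(indicator bad w :: real) = 0" by simp
      then show ?thesis using cF0 i0 by linarith
    next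
      case inbad: True
      then have dn: "\<delta> \<le> norm (y - G z)" using w by (simp add: bad_def)
      show ?thesis
      proof (cases "z \<in> B k")
        case True then show ?thesis using cF0 inbad w by simp
      next
        case False
        have "\<exists>b\<in>Basis. \<delta>' \<le> \<bar>(y - G z) \<bullet> b\<bar>"
        proof (rule ccontr)
          assume "\<not> ?thesis"
          then have lt: "\<And>b. b \<in> Basis \<Longrightarrow> \<bar>(y - G z) \<bullet> b\<bar> < \<delta>'" by auto
          have "norm (y - G z) \<le> (\<Sum>b\<in>Basis. \<bar>(y - G z) \<bullet> b\<bar>)" by (rule norm_le_l1)
          also have "\<dots> < of_nat (card (Basis::'a set)) * \<delta>'"
            by (rule sum_bounded_above_strict) (auto intro: lt)
          also have "\<dots> = \<delta>" using dd by (simp add: \<delta>'_def dd_def)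
          finally show False using dn by simp
        qed
        then obtain b where b: "b \<in> Basis" "\<delta>' \<le> \<bar>(y - G z) \<bullet> b\<bar>" by blast
        obtain v where v: "v \<in> V" "\<delta>' \<le> (y - G z) \<bullet> v"
        proof (cases "0 \<le> (y - G z) \<bullet> b")
          case True then show ?thesis using b by (intro that[of b]) (auto simp: V_def)
        next
          case False then show ?thesis using b by (intro that[of "-b"]) (auto simp: V_def inner_minus_right)
        qed
        have "\<not> ereal (Sf z + T * (G z \<bullet> v) + T * \<delta>' / 2) \<le> conj \<psi> (yhat + z + T *\<^sub>R v)"
          using False v(1) unfolding B_def T_def by blast
        then have lt: "conj \<psi> (yhat + z + T *\<^sub>R v) < ereal (Sf z + T * (G z \<bullet> v) + T * \<delta>' / 2)" by simp
        have "ereal ((yhat + z + T *\<^sub>R v) \<bullet> y) - \<psi> y \<le> conj \<psi> (yhat + z + T *\<^sub>R v)" by (rule FY)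
        then have "ereal ((yhat + z + T *\<^sub>R v) \<bullet> y - psr y) \<le> conj \<psi> (yhat + z + T *\<^sub>R v)" using fy by simp
        then have "ereal ((yhat + z + T *\<^sub>R v) \<bullet> y - psr y) < ereal (Sf z + T * (G z \<bullet> v) + T * \<delta>' / 2)"
          using lt by (rule order_le_less_trans)
        then have h1: "(yhat + z + T *\<^sub>R v) \<bullet> y - psr y < Sf z + T * (G z \<bullet> v) + T * \<delta>' / 2" by simp
        have h2: "(yhat + z + T *\<^sub>R v) \<bullet> y = yhat \<bullet> y + y \<bullet> z + T * (v \<bullet> y)"
          by (simp add: inner_add_left inner_commute[of z y])
        have h3: "(y - G z) \<bullet> v = v \<bullet> y - G z \<bullet> v" by (simp add: inner_diff_left inner_commute[of y v])
        have h4: "T * \<delta>' \<le> T * ((y - G z) \<bullet> v)" using v(2) T by (intro mult_left_mono) auto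
        have h5: "T * ((y - G z) \<bullet> v) = T * (v \<bullet> y) - T * (G z \<bullet> v)" using h3 by (simp add: algebra_simps)
        have Fw: "Fc w = psr y + Sf z - yhat \<bullet> y - y \<bullet> z" using w by (simp add: Fc_def)
        have "T * \<delta>' / 2 < Fc w" using h1 h2 h4 h5 Fw by linarith
        then have "c * (T * \<delta>' / 2) < c * Fc w" using c by simp
        moreover have "c * (T * \<delta>' / 2) = 1" using T \<delta>' by (simp add: c_def)
        ultimately have "1 < c * Fc w" by simp
        then show ?thesis using inbad False w by simp
      qed
    qed
  qed
  have fin\<pi>: "finite_measure \<pi>" using cf(1) by (rule prob_space.finite_measure)
  have ib: "integrable \<pi> (indicator bad :: _ \<Rightarrow> real)"
    using bads finite_measure.emeasure_finite[OF fin\<pi>, of bad] by (simp add: less_top)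
  have finq: "finite_measure q" using qP(1) by (rule prob_space.finite_measure)
  have iBq: "integrable q (indicator (B k) :: _ \<Rightarrow> real)"
    using Bq finite_measure.emeasure_finite[OF finq, of "B k"] by (simp add: less_top)
  have Bm: "(indicator (B k) :: _ \<Rightarrow> real) \<in> borel_measurable borel" using Bs by simp
  have iB: "integrable \<pi> (\<lambda>w. indicator (B k) (snd w) :: real)" by (rule coupling_snd(1)[OF \<pi> Bm iBq])
  have "measure \<pi> bad = (\<integral>w. indicator bad w \<partial>\<pi>)" using cf(3) by simp
  also have "\<dots> \<le> (\<integral>w. c * Fc w + indicator (B k) (snd w) \<partial>\<pi>)"
    by (rule integral_mono_AE[OF ib _ pw]) (intro Bochner_Integration.integrable_add integrable_mult_right Fi iB)
  also have "\<dots> = c * (\<integral>w. Fc w \<partial>\<pi>) + (\<integral>w. indicator (B k) (snd w) \<partial>\<pi>)"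
    using Fi iB by simp
  also have "(\<integral>w. (indicator (B k) (snd w) :: real) \<partial>\<pi>) = (\<integral>z. (indicator (B k) z :: real) \<partial>q)"
    by (rule coupling_snd(2)[OF \<pi> Bm iBq])
  also have "(\<integral>z. (indicator (B k) z :: real) \<partial>q) = measure q (B k)" using qP(3) by simp
  also have "c * (\<integral>w. Fc w \<partial>\<pi>) \<le> c * (T * \<delta>' * \<eta> / 4)" using Fl c by simp
  also have "c * (T * \<delta>' * \<eta> / 4) = \<eta> / 2" using T \<delta>' by (simp add: c_def)
  finally have "measure \<pi> bad \<le> \<eta>/2 + measure q (B k)" by simp
  then have "measure \<pi> bad \<le> \<eta>" using k by simp
  then show ?thesis using \<pi> unfolding bad_def by blast
qed

end



lemma pre_sets: "f \<in> borel_measurable borel \<Longrightarrow> S \<in> sets borel \<Longrightarrow> {w. f w \<in> S} \<in> sets borel"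
  using measurable_sets[of f borel borel S] by (simp add: vimage_def)

lemma open_infdist: "open {u::'a::euclidean_space. infdist u A < d}"
  by (intro open_Collect_less continuous_intros)

lemma infdist_borel: "{u::'a::euclidean_space. infdist u A < d} \<in> sets borel"
  by (rule borel_open[OF open_infdist])

lemma closed_le_gen:
  fixes M N :: "'a::euclidean_space measure"
  assumes N: "finite_measure N" "sets N = sets borel"
    and A: "closed A" and h: "\<And>\<delta>. 0 < \<delta> \<Longrightarrow> measure M A \<le> measure N {u. infdist u A < \<delta>}"
  shows "measure M A \<le> measure N A"
proof (cases "A = {}")
  case True
  then have "measure M A \<le> measure N {u. infdist u A < 1}" using h[of 1] by simp
  moreover have "measure M A = 0" using True by simp
  ultimately show ?thesis using True by simp
next
  case False
  define D where "D n = {u::'a. infdist u A < inverse (real (Suc n))}" for n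
  have Ds: "range D \<subseteq> sets N"
    using N(2) infdist_borel unfolding D_def by auto
  have dec: "decseq D"
    unfolding decseq_def D_def
  proof (intro allI impI subsetI)
    fix m n :: nat and u assume mn: "m \<le> n" and u: "u \<in> {u. infdist u A < inverse (real (Suc n))}"
    have "inverse (real (Suc n)) \<le> inverse (real (Suc m))" using mn by (simp add: le_imp_inverse_le)
    then show "u \<in> {u. infdist u A < inverse (real (Suc m))}" using u
      unfolding mem_Collect_eq by (rule order_less_le_trans[rotated])
  qed
  have int: "(\<Inter>n. D n) = A"
  proof
    show "A \<subseteq> (\<Inter>n. D n)" unfolding D_def by auto
    show "(\<Inter>n. D n) \<subseteq> A"
    proof
      fix u assume u: "u \<in> (\<Inter>n. D n)"
      have "infdist u A = 0"
      proof (rule ccontr)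
        assume "infdist u A \<noteq> 0"
        then have "0 < infdist u A" using infdist_nonneg[of u A] by simp
        then have "eventually (\<lambda>n. inverse (real (Suc n)) < infdist u A) sequentially"
          using Archimedean_eventually_inverse by blast
        then obtain n where "inverse (real (Suc n)) < infdist u A" by (auto simp: eventually_sequentially)
        moreover have "u \<in> D n" using u by blast
        ultimately show False unfolding D_def by simp
      qed
      then have "u \<in> closure A" using in_closure_iff_infdist_zero[OF False] by simp
      then show "u \<in> A" using A by (simp add: closure_closed)
    qed
  qed
  have "(\<lambda>n. measure N (D n)) \<longlonglongrightarrow> measure N (\<Inter>n. D n)"
    by (rule finite_measure.finite_Lim_measure_decseq[OF N(1) Ds dec])
  then have lim: "(\<lambda>n. measure N (D n)) \<longlonglongrightarrow> measure N A" using int by simp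
  show ?thesis
    by (rule LIMSEQ_le_const[OF lim]) (auto simp: D_def intro!: h)
qed

context setting begin

lemma approx_n:
  assumes p: "p \<in> P2x x" and val: "eint p \<psi> - MCov p q = ereal C" and A: "closed A" and \<delta>: "0 < \<delta>"
  shows "measure p A \<le> measure ph {u. infdist u A < \<delta>}" "measure ph A \<le> measure p {u. infdist u A < \<delta>}"
proof -
  define Ad where "Ad = {u. infdist u A < \<delta>}"
  have Adb: "Ad \<in> sets borel" unfolding Ad_def by (rule infdist_borel)
  have Ab: "A \<in> sets borel" using A by simp
  have key: "\<exists>\<pi>\<in>couplings p q. measure p A \<le> measure ph Ad + \<eta> \<and> measure ph A \<le> measure p Ad + \<eta>"
    if \<eta>: "0 < \<eta>" for \<eta>
  proof -
    obtain \<pi> where \<pi>: "\<pi> \<in> couplings p q" and bd: "measure \<pi> {w. \<delta> \<le> norm (fst w - G (snd w))} \<le> \<eta>"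
      using bad_small[OF p val \<delta> \<eta>] by blast
    note cf = coupling_facts[OF \<pi>]
    have fin\<pi>: "finite_measure \<pi>" using cf(1) by (rule prob_space.finite_measure)
    define bad where "bad = {w. \<delta> \<le> norm (fst w - G (snd w))}"
    have bads: "bad \<in> sets \<pi>" using cf(2) unfolding bad_def by simp
    have mfst: "(fst :: 'a \<times> 'a \<Rightarrow> 'a) \<in> borel_measurable borel" by (rule fst_borel)
    have mGs: "(\<lambda>w::'a\<times>'a. G (snd w)) \<in> borel_measurable borel" by measurable
    have s1: "{w. fst w \<in> A} \<in> sets \<pi>" using pre_sets[OF mfst Ab] cf(2) by simp
    have s2: "{w. fst w \<in> Ad} \<in> sets \<pi>" using pre_sets[OF mfst Adb] cf(2) by simp
    have s3: "{w. G (snd w) \<in> A} \<in> sets \<pi>" using pre_sets[OF mGs Ab] cf(2) by simp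
    have s4: "{w. G (snd w) \<in> Ad} \<in> sets \<pi>" using pre_sets[OF mGs Adb] cf(2) by simp
    have mp: "measure p S = measure \<pi> {w. fst w \<in> S}" if S: "S \<in> sets borel" for S
    proof -
      have "measure (distr \<pi> borel fst) S = measure \<pi> (fst -` S \<inter> space \<pi>)"
        by (rule measure_distr[OF cf(4) S])
      then show ?thesis using cf(6) cf(3) by (simp add: vimage_def)
    qed
    have mph: "measure ph S = measure \<pi> {w. G (snd w) \<in> S}" if S: "S \<in> sets borel" for S
    proof -
      have GS: "G -` S \<inter> space borel \<in> sets borel" by (rule measurable_sets[OF G_meas S])
      have "measure ph S = measure q (G -` S \<inter> space q)" by (rule measure_distr[OF G_q S])
      also have "\<dots> = measure (distr \<pi> borel snd) (G -` S \<inter> space borel)" using cf(7) qP(3) by simp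
      also have "\<dots> = measure \<pi> (snd -` (G -` S \<inter> space borel) \<inter> space \<pi>)"
        by (rule measure_distr[OF cf(5) GS])
      finally show ?thesis using cf(3) by (simp add: vimage_def)
    qed
    have sub1: "{w. fst w \<in> A} \<subseteq> {w. G (snd w) \<in> Ad} \<union> bad"
    proof
      fix w :: "'a \<times> 'a" assume w: "w \<in> {w. fst w \<in> A}"
      show "w \<in> {w. G (snd w) \<in> Ad} \<union> bad"
      proof (cases "w \<in> bad")
        case False
        then have "norm (fst w - G (snd w)) < \<delta>" unfolding bad_def by simp
        moreover have "infdist (G (snd w)) A \<le> dist (G (snd w)) (fst w)" using w by (intro infdist_le) simp
        ultimately have "infdist (G (snd w)) A < \<delta>" by (simp add: dist_norm norm_minus_commute)
        then show ?thesis unfolding Ad_def by simp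
      qed simp
    qed
    have sub2: "{w. G (snd w) \<in> A} \<subseteq> {w. fst w \<in> Ad} \<union> bad"
    proof
      fix w :: "'a \<times> 'a" assume w: "w \<in> {w. G (snd w) \<in> A}"
      show "w \<in> {w. fst w \<in> Ad} \<union> bad"
      proof (cases "w \<in> bad")
        case False
        then have "norm (fst w - G (snd w)) < \<delta>" unfolding bad_def by simp
        moreover have "infdist (fst w) A \<le> dist (fst w) (G (snd w))" using w by (intro infdist_le) simp
        ultimately have "infdist (fst w) A < \<delta>" by (simp add: dist_norm)
        then show ?thesis unfolding Ad_def by simp
      qed simp
    qed
    have "measure p A = measure \<pi> {w. fst w \<in> A}" by (rule mp[OF Ab])
    also have "\<dots> \<le> measure \<pi> ({w. G (snd w) \<in> Ad} \<union> bad)"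
      by (rule finite_measure.finite_measure_mono[OF fin\<pi> sub1]) (use s4 bads in auto)
    also have "\<dots> \<le> measure \<pi> {w. G (snd w) \<in> Ad} + measure \<pi> bad"
      by (rule measure_Un_le[OF s4 bads])
    also have "measure \<pi> {w. G (snd w) \<in> Ad} = measure ph Ad" by (rule mph[OF Adb, symmetric])
    finally have r1: "measure p A \<le> measure ph Ad + \<eta>" using bd unfolding bad_def by simp
    have "measure ph A = measure \<pi> {w. G (snd w) \<in> A}" by (rule mph[OF Ab])
    also have "\<dots> \<le> measure \<pi> ({w. fst w \<in> Ad} \<union> bad)"
      by (rule finite_measure.finite_measure_mono[OF fin\<pi> sub2]) (use s2 bads in auto)
    also have "\<dots> \<le> measure \<pi> {w. fst w \<in> Ad} + measure \<pi> bad"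
      by (rule measure_Un_le[OF s2 bads])
    also have "measure \<pi> {w. fst w \<in> Ad} = measure p Ad" by (rule mp[OF Adb, symmetric])
    finally have r2: "measure ph A \<le> measure p Ad + \<eta>" using bd unfolding bad_def by simp
    show ?thesis using r1 r2 \<pi> by blast
  qed
  show "measure p A \<le> measure ph {u. infdist u A < \<delta>}"
    by (rule field_le_epsilon) (use key in \<open>auto simp: Ad_def\<close>)
  show "measure ph A \<le> measure p {u. infdist u A < \<delta>}"
    by (rule field_le_epsilon) (use key in \<open>auto simp: Ad_def\<close>)
qed

lemma uniq:
  assumes p: "p \<in> P2x x" and val0: "eint p \<psi> - MCov p q = phi \<psi> q x"
  shows "p = ph"
proof -
  have val: "eint p \<psi> - MCov p q = ereal C" using val0 phi_eq by simp
  have pP: "p \<in> P2" using p unfolding P2x_def by blast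
  note pD = P2D[OF pP]
  note hD = P2D[OF ph_P2]
  have finp: "finite_measure p" using pD(1) by (rule prob_space.finite_measure)
  have finh: "finite_measure ph" using hD(1) by (rule prob_space.finite_measure)
  have cl: "measure p A = measure ph A" if A: "closed A" for A
  proof (rule antisym)
    show "measure p A \<le> measure ph A"
      by (rule closed_le_gen[OF finh hD(2) A]) (rule approx_n(1)[OF p val A])
    show "measure ph A \<le> measure p A"
      by (rule closed_le_gen[OF finp pD(2) A]) (rule approx_n(2)[OF p val A])
  qed
  have sg: "sets (borel :: 'a measure) = sigma_sets UNIV (Collect closed)"
    by (subst borel_eq_closed) (rule sets_measure_of, simp)
  show ?thesis
  proof (rule measure_eqI_generator_eq[where E="Collect closed" and \<Omega>=UNIV and A="\<lambda>_. UNIV"])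
    show "Int_stable (Collect closed)" by (auto simp: Int_stable_def)
    show "Collect closed \<subseteq> Pow UNIV" by simp
    show "\<And>X. X \<in> Collect closed \<Longrightarrow> emeasure p X = emeasure ph X"
      using cl finite_measure.emeasure_eq_measure[OF finp] finite_measure.emeasure_eq_measure[OF finh]
      by simp
    show "sets p = sigma_sets UNIV (Collect closed)" using pD(2) sg by simp
    show "sets ph = sigma_sets UNIV (Collect closed)" using sg by simp
    show "range (\<lambda>_. UNIV) \<subseteq> Collect closed" by simp
    show "(\<Union>i::nat. UNIV) = UNIV" by simp
    show "\<And>i::nat. emeasure p UNIV \<noteq> \<infinity>"
      using finite_measure.emeasure_finite[OF finp] by simp
  qed
qed

end

theorem lemma3p3:
  fixes q :: "'a::euclidean_space measure" and \<psi> :: "'a \<Rightarrow> ereal"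
    and x yhat :: 'a and G :: "'a \<Rightarrow> 'a"
  assumes q: "q \<in> P2" and small: "no_mass_small_sets q"
    and psi_ninf: "\<forall>y. \<psi> y \<noteq> -\<infinity>" and psi_lsc: "elsc \<psi>" and psi_cvx: "econvex \<psi>"
    and G_meas: "G \<in> borel_measurable borel"
    and G_grad: "AE z in q. has_egradient (conj \<psi>) (yhat + z) (G z)"
    and phat: "distr q borel G \<in> P2x x"
  shows "(eint (distr q borel G) \<psi> - MCov (distr q borel G) q = phi \<psi> q x \<and>
          (\<forall>p\<in>P2x x. eint p \<psi> - MCov p q = phi \<psi> q x \<longrightarrow> p = distr q borel G))
     \<and> (phi \<psi> q x \<noteq> -\<infinity> \<and> x \<in> interior (edom \<psi>) \<longrightarrow>
          ereal (x \<bullet> yhat) - eint q (\<lambda>z. conj \<psi> (yhat + z))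
            = (SUP y. ereal (x \<bullet> y) - eint q (\<lambda>z. conj \<psi> (y + z))))"
proof -
  interpret setting q \<psi> x yhat G
    by (rule setting.intro[OF q psi_ninf psi_lsc G_meas G_grad phat])
  show ?thesis
  proof (intro conjI ballI impI)
    show "eint (distr q borel G) \<psi> - MCov (distr q borel G) q = phi \<psi> q x"
      using val_ph phi_eq by simp
  next
    fix p assume "p \<in> P2x x" "eint p \<psi> - MCov p q = phi \<psi> q x"
    then show "p = distr q borel G" by (rule uniq)
  next
    show "ereal (x \<bullet> yhat) - eint q (\<lambda>z. conj \<psi> (yhat + z))
            = (SUP y. ereal (x \<bullet> y) - eint q (\<lambda>z. conj \<psi> (y + z)))"
      by (rule part2)
  qed
qed


end
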